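(* Let $\kappa$ be a CMF kernel in dimension $D$. For all $\theta_1,\theta_2,\theta_3\in\mathbb R^D$, $\kappa(\theta_1,\theta_2)\,\kappa(\theta_2,\theta_3)\le\kappa(\theta_1,\theta_3)$.
   Context: CMF: $\varphi:[0,\infty)\to\mathbb R$ infinitely differentiable on $(0,\infty)$, right-continuous at $0$, $(-1)^n\varphi^{(n)}(x)\ge0$ for $x>0$, $n\ge0$. A CMF kernel in dimension $D$ is $\kappa(\theta,\theta')=\varphi(\|\theta-\theta'\|_p^p)$ with $\varphi$ a CMF, $\varphi(0)=1$, $\lim_{x\to\infty}\varphi(x)=0$, $0<p\le1$, $\|\theta\|_p^p=\sum_d|\theta[d]|^p$. *)

theory Defs
  imports "HOL-Analysis.Analysis"
begin

text \<open>Completely monotone function (CMF) on [0,\<infinity>): infinitely differentiable on (0,\<infinity>),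
  right-continuous at 0, and (-1)^n \<phi>^(n)(x) \<ge> 0 for all x > 0 and n \<ge> 0.
  Values of \<phi> at negative arguments are irrelevant.\<close>
definition CMF :: "(real \<Rightarrow> real) \<Rightarrow> bool" where
  "CMF \<phi> \<longleftrightarrow>
     (\<forall>n::nat. \<forall>x>0. ((deriv ^^ n) \<phi>) differentiable (at x)) \<and>
     continuous (at_right 0) \<phi> \<and>
     (\<forall>n::nat. \<forall>x>0. (-1) ^ n * (deriv ^^ n) \<phi> x \<ge> 0)"

definition pnorm_pow :: "real \<Rightarrow> real ^ 'd \<Rightarrow> real" where
  "pnorm_pow p \<theta> = (\<Sum>d\<in>UNIV. \<bar>\<theta> $ d\<bar> powr p)"

definition CMF_kernel_params :: "(real \<Rightarrow> real) \<Rightarrow> real \<Rightarrow> bool" where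
  "CMF_kernel_params \<phi> p \<longleftrightarrow>
     CMF \<phi> \<and> \<phi> 0 = 1 \<and> (\<phi> \<longlongrightarrow> 0) at_top \<and> 0 < p \<and> p \<le> 1"

definition cmf_kernel :: "(real \<Rightarrow> real) \<Rightarrow> real \<Rightarrow> real ^ 'd \<Rightarrow> real ^ 'd \<Rightarrow> real" where
  "cmf_kernel \<phi> p \<theta> \<theta>' = \<phi> (pnorm_pow p (\<theta> - \<theta>'))"

end

theory Submission
  imports Defs
begin

lemma fact_sum_nz: "(fact n::real) + fact n * real n \<noteq> 0"
proof -
  have "(0::real) < fact n + fact n * real n" by (intro add_pos_nonneg) auto
  then show ?thesis by linarith
qed


lemma F_deriv:
  fixes D :: "nat \<Rightarrow> real \<Rightarrow> real"
  assumes der: "\<And>n t. t > 0 \<Longrightarrow> DERIV (D n) t :> D (Suc n) t" and t: "t > 0"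
  shows "DERIV (\<lambda>t. \<Sum>k<Suc n. D k t / fact k * (x - t)^k) t :> D (Suc n) t / fact n * (x - t)^n"
proof (induction n)
  case 0 show ?case using der[OF t, of 0] by simp
next
  case (Suc n)
  have p: "DERIV (\<lambda>t. (x - t)^Suc n) t :> real (Suc n) * (x-t)^n * (-1)"
    by (auto intro!: derivative_eq_intros simp: algebra_simps) (cases n; simp add: algebra_simps)
  have d: "DERIV (\<lambda>t. D (Suc n) t / fact (Suc n) * (x - t)^Suc n) t :>
     D (Suc (Suc n)) t / fact (Suc n) * (x-t)^Suc n + real (Suc n) * (x-t)^n * (-1) * (D (Suc n) t / fact (Suc n))"
    by (rule DERIV_mult[OF DERIV_cdivide[OF der[OF t]] p])
  have fs: "(fact (Suc n)::real) = real (Suc n) * fact n" by simp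
  have "(0::real) < fact n + fact n * real n" by (intro add_pos_nonneg) auto
  then have fp: "(fact n::real) + fact n * real n \<noteq> 0" by linarith
  have e: "real (Suc n) * (x-t)^n * (-1) * (D (Suc n) t / fact (Suc n)) = - (D (Suc n) t / fact n * (x - t)^n)"
    using fp by (simp only: fs) (simp add: field_simps)
  have "DERIV (\<lambda>t. (\<Sum>k<Suc n. D k t / fact k * (x - t)^k) + D (Suc n) t / fact (Suc n) * (x - t)^Suc n) t :>
     D (Suc n) t / fact n * (x - t)^n + (D (Suc (Suc n)) t / fact (Suc n) * (x-t)^Suc n + real (Suc n) * (x-t)^n * (-1) * (D (Suc n) t / fact (Suc n)))"
    by (rule DERIV_add[OF Suc d])
  then show ?case by (simp add: e)
qed

lemma cauchy_rem:
  fixes D :: "nat \<Rightarrow> real \<Rightarrow> real"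
  assumes der: "\<And>n t. t > 0 \<Longrightarrow> DERIV (D n) t :> D (Suc n) t" and x: "0 < x" "x < y"
  shows "\<exists>\<xi>. x < \<xi> \<and> \<xi> < y \<and> D 0 x = (\<Sum>k<Suc n. D k y / fact k * (x - y)^k)
            + D (Suc n) \<xi> / fact n * (x - \<xi>)^n * (x - y)"
proof -
  define F where "F = (\<lambda>t. \<Sum>k<Suc n. D k t / fact k * (x - t)^k)"
  have "\<exists>z. x < z \<and> z < y \<and> (F y - F x = (y - x) * (D (Suc n) z / fact n * (x - z)^n))"
    apply (rule MVT2[OF x(2)])
    unfolding F_def using x by (intro F_deriv der) auto
  then obtain z where z: "x < z" "z < y" "F y - F x = (y - x) * (D (Suc n) z / fact n * (x - z)^n)" by blast
  have Fx: "F x = D 0 x"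
    unfolding F_def by (induction n) auto
  have g: "\<And>c. F y - (y - x) * c = F y + c * (x - y)" by algebra
  have "D 0 x = F y - (y - x) * (D (Suc n) z / fact n * (x - z)^n)"
    using z(3) Fx by simp
  then have "D 0 x = F y + D (Suc n) z / fact n * (x - z)^n * (x - y)"
    by (simp only: g)
  then show ?thesis using z unfolding F_def by (intro exI[of _ z]) auto
qed

lemma neg_pow_flip: "((a::real) - c)^k = (-1)^k * (c - a)^k"
proof -
  have "((a::real) - c)^k = (-(c - a))^k" by simp
  also have "\<dots> = (-1)^k * (c - a)^k" by (rule power_minus)
  finally show ?thesis .
qed

lemma term_nonneg:
  fixes D :: "nat \<Rightarrow> real \<Rightarrow> real"
  assumes sgn: "\<And>n t. t > 0 \<Longrightarrow> 0 \<le> (-1)^n * D n t" and "0 < c" "a \<le> b"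
  shows "0 \<le> D k c / fact k * (a - b)^k"
proof -
  have "D k c / fact k * (a - b)^k = ((-1)^k * D k c) * (b - a)^k / fact k"
    by (simp add: neg_pow_flip[of a b])
  also have "\<dots> \<ge> 0" using sgn[OF assms(2), of k] assms(3) by simp
  finally show ?thesis .
qed

lemma coef_bound:
  fixes D :: "nat \<Rightarrow> real \<Rightarrow> real"
  assumes der: "\<And>n t. t > 0 \<Longrightarrow> DERIV (D n) t :> D (Suc n) t"
    and sgn: "\<And>n t. t > 0 \<Longrightarrow> 0 \<le> (-1)^n * D n t" and a: "0 < a" "a < c"
  shows "(-1)^m * D m c / fact m * (c - a)^m \<le> D 0 a"
proof -
  obtain t where t: "a < t" "t < c" "D 0 a = (\<Sum>k<Suc m. D k c / fact k * (a - c)^k) + D (Suc m) t / fact (Suc m) * (a - c)^Suc m"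
    using Taylor_down[of "Suc m" D "D 0" a c c] der a by force
  have r: "0 \<le> D (Suc m) t / fact (Suc m) * (a - c)^Suc m"
    using a t by (intro term_nonneg[OF sgn]) auto
  have s: "(\<Sum>k<Suc m. D k c / fact k * (a - c)^k) = (\<Sum>k<m. D k c / fact k * (a - c)^k) + D m c / fact m * (a - c)^m"
    by simp
  have "0 \<le> (\<Sum>k<m. D k c / fact k * (a - c)^k)"
    using a by (intro sum_nonneg term_nonneg[OF sgn]) auto
  moreover have "D m c / fact m * (a - c)^m = (-1)^m * D m c / fact m * (c - a)^m"
    by (simp add: neg_pow_flip[of a c])
  ultimately show ?thesis using t(3) r s by linarith
qed
  
lemma taylor_sums:
  fixes D :: "nat \<Rightarrow> real \<Rightarrow> real"
  assumes der: "\<And>n t. t > 0 \<Longrightarrow> DERIV (D n) t :> D (Suc n) t"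
    and sgn: "\<And>n t. t > 0 \<Longrightarrow> 0 \<le> (-1)^n * D n t" and x: "0 < x" "x < y"
  shows "(\<lambda>k. D k y / fact k * (x - y)^k) sums D 0 x"
proof -
  define q where "q = (y - x) / (y - x/2)"
  have q: "0 < q" "q < 1" using x by (auto simp: q_def field_simps)
  define K where "K = (y - x) * D 0 (x/2) * (2/x) / q"
  define R where "R = (\<lambda>n. D 0 x - (\<Sum>k<Suc n. D k y / fact k * (x - y)^k))"
  have D0: "0 \<le> D 0 (x/2)" using sgn[of "x/2" 0] x by simp
  have Rb: "0 \<le> R n \<and> R n \<le> K * (real (Suc n) * q^Suc n)" for n
  proof -
    obtain \<xi> where \<xi>: "x < \<xi>" "\<xi> < y" and e: "D 0 x = (\<Sum>k<Suc n. D k y / fact k * (x - y)^k)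
            + D (Suc n) \<xi> / fact n * (x - \<xi>)^n * (x - y)"
      using cauchy_rem[of D x y n, OF der x] by blast
    define A where "A = (-1)^Suc n * D (Suc n) \<xi> / fact (Suc n)"
    have h: "0 \<le> (-1)^Suc n * D (Suc n) \<xi>" using \<xi> x by (intro sgn) auto
    have A0: "0 \<le> A" unfolding A_def by (intro divide_nonneg_pos h) auto
    have Ab: "A * (\<xi> - x/2)^Suc n \<le> D 0 (x/2)"
      using coef_bound[OF der sgn, of "x/2" \<xi> "Suc n"] x \<xi> unfolding A_def by simp
    have fs: "(fact (Suc n)::real) = real (Suc n) * fact n" by simp
    have "R n = D (Suc n) \<xi> / fact n * (x - \<xi>)^n * (x - y)" using e by (simp add: R_def)
    also have "\<dots> = real (Suc n) * A * (\<xi> - x)^n * (y - x)"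
      unfolding A_def neg_pow_flip[of x \<xi>] fs using fact_sum_nz[of n] by (simp add: field_simps)
    finally have Rn: "R n = real (Suc n) * A * (\<xi> - x)^n * (y - x)" .
    define u where "u = \<xi> - x/2"
    define v where "v = \<xi> - x"
    have uv: "0 < u" "0 \<le> v" "v < u" "x/2 \<le> u" using x \<xi> by (auto simp: u_def v_def)
    have vu: "v / u \<le> q"
    proof -
      have m: "\<xi> * x \<le> y * x" using x \<xi> by (intro mult_right_mono) auto
      have eq: "(y - x) * u - v * (y - x/2) = (y * x - \<xi> * x) / 2" unfolding u_def v_def by (simp add: field_simps)
      have "0 \<le> (y * x - \<xi> * x) / 2" using m by simp
      then have "0 \<le> (y - x) * u - v * (y - x/2)" unfolding eq .
      then have "v * (y - x/2) \<le> (y - x) * u" by simp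
      then show ?thesis using uv x unfolding q_def by (simp add: field_simps)
    qed
    have "A * v^n = (A * u^Suc n) * (v/u)^n / u"
      using uv by (simp add: field_simps power_divide)
    also have "\<dots> \<le> D 0 (x/2) * (v/u)^n / u"
      using Ab uv unfolding u_def by (intro divide_right_mono mult_right_mono) auto
    also have "\<dots> \<le> D 0 (x/2) * q^n / u"
      using uv vu D0 by (intro divide_right_mono mult_left_mono power_mono) auto
    also have "\<dots> \<le> D 0 (x/2) * q^n / (x/2)"
      using uv x D0 q by (intro divide_left_mono) auto
    finally have Av: "A * v^n \<le> D 0 (x/2) * q^n / (x/2)" .
    have "R n = real (Suc n) * (A * v^n) * (y - x)" unfolding Rn v_def by simp
    also have "\<dots> \<le> real (Suc n) * (D 0 (x/2) * q^n / (x/2)) * (y - x)"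
      using Av x by (intro mult_right_mono mult_left_mono) auto
    also have "\<dots> = K * (real (Suc n) * q^Suc n)"
      unfolding K_def using q x by (simp add: field_simps)
    finally have up: "R n \<le> K * (real (Suc n) * q^Suc n)" .
    have "0 \<le> R n" unfolding Rn using A0 x \<xi> by simp
    with up show ?thesis by simp
  qed
  have lim0: "(\<lambda>n. of_nat n * q^n) \<longlonglongrightarrow> 0" using q by (intro powser_times_n_limit_0) simp
  have "(\<lambda>n. real (Suc n) * q^Suc n) \<longlonglongrightarrow> 0" using LIMSEQ_Suc[OF lim0] by simp
  then have "(\<lambda>n. K * (real (Suc n) * q^Suc n)) \<longlonglongrightarrow> 0" by (rule tendsto_mult_right_zero)
  then have "R \<longlonglongrightarrow> 0" using Rb by (intro tendsto_sandwich[of "\<lambda>_. 0" R _ "\<lambda>n. K * (real (Suc n) * q^Suc n)"]) auto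
  then have "(\<lambda>n. D 0 x - R n) \<longlonglongrightarrow> D 0 x - 0" by (intro tendsto_diff) auto
  then have "(\<lambda>n. \<Sum>k<Suc n. D k y / fact k * (x - y)^k) \<longlonglongrightarrow> D 0 x" by (simp add: R_def)
  then show ?thesis unfolding sums_def
    by (rule LIMSEQ_imp_Suc[of "\<lambda>n. \<Sum>k<n. D k y / fact k * (x - y)^k"])
qed

lemma cmf_der:
  assumes "CMF \<phi>" "0 < t"
  shows "DERIV ((deriv^^n) \<phi>) t :> (deriv^^Suc n) \<phi> t"
  using assms unfolding CMF_def by (simp add: DERIV_deriv_iff_real_differentiable)

lemma cmf_sgn:
  assumes "CMF \<phi>" "0 < t"
  shows "0 \<le> (-1)^n * (deriv^^n) \<phi> t"
  using assms unfolding CMF_def by simp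

lemma cmf_sums:
  assumes c: "CMF \<phi>" and x: "0 < x" "x < y"
  shows "(\<lambda>k. (deriv^^(k+j)) \<phi> y / fact k * (x - y)^k) sums (deriv^^j) \<phi> x"
proof -
  define D where "D = (\<lambda>n t. (-1)^j * (deriv^^(n+j)) \<phi> t)"
  have der: "DERIV (D n) t :> D (Suc n) t" if "t > 0" for n t
    unfolding D_def using cmf_der[OF c that, of "n+j"] by (auto intro: DERIV_cmult)
  have sgn: "0 \<le> (-1)^n * D n t" if "t > 0" for n t
    unfolding D_def using cmf_sgn[OF c that, of "n+j"] by (simp add: power_add mult_ac)
  have "(\<lambda>k. D k y / fact k * (x - y)^k) sums D 0 x" by (rule taylor_sums[OF der sgn x])
  then have "(\<lambda>k. (-1)^j * (D k y / fact k * (x - y)^k)) sums ((-1)^j * D 0 x)"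
    by (rule sums_mult)
  moreover have "(-1::real)^j * (-1)^j = 1" by (simp flip: power_add)
  ultimately show ?thesis unfolding D_def by (simp add: mult.assoc[symmetric])
qed

lemma fact_ratio: "real (Suc k) * (a / fact (Suc k)) = (a::real) / fact k"
proof -
  have nz: "real (Suc k) \<noteq> 0" by simp
  show ?thesis unfolding fact_Suc times_divide_eq_right by (rule mult_divide_mult_cancel_left[OF nz])
qed

lemma cmf_lc:
  assumes c: "CMF \<phi>" and x: "0 < x" and Bp: "0 < \<phi> x"
  shows "((deriv^^1) \<phi> x)^2 \<le> \<phi> x * (deriv^^2) \<phi> x"
proof -
  define d1 where "d1 = (deriv^^1) \<phi> x"
  define d2 where "d2 = (deriv^^2) \<phi> x"
  define B where "B = \<phi> x"
  have d1n: "d1 \<le> 0" using cmf_sgn[OF c x, of 1] unfolding d1_def by simp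
  have key: "B * d1 \<le> s * (B * d2 - d1^2)" if s: "0 < s" for s
  proof -
    define y where "y = x + s"
    have xy: "x < y" using s by (simp add: y_def)
    define b where "b = (\<lambda>k. (deriv^^k) \<phi> y / fact k * (x - y)^k)"
    have b0: "0 \<le> b k" for k
      unfolding b_def using x xy
      by (intro term_nonneg[where D="\<lambda>n. (deriv^^n) \<phi>"]) (auto intro: cmf_sgn[OF c])
    have S0: "b sums B" using cmf_sums[OF c x xy, of 0] unfolding b_def B_def by simp
    have S1': "(\<lambda>k. (deriv^^(k+1)) \<phi> y / fact k * (x - y)^k) sums d1"
      using cmf_sums[OF c x xy, of 1] unfolding d1_def .
    have "(\<lambda>k. (x - y) * ((deriv^^(k+1)) \<phi> y / fact k * (x - y)^k)) sums ((x - y) * d1)"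
      by (rule sums_mult[OF S1'])
    moreover have "(\<lambda>k. (x - y) * ((deriv^^(k+1)) \<phi> y / fact k * (x - y)^k)) = (\<lambda>k. real (Suc k) * b (Suc k))"
    proof
      fix k
      have "real (Suc k) * b (Suc k) = (real (Suc k) * ((deriv^^Suc k) \<phi> y / fact (Suc k))) * (x - y)^Suc k"
        unfolding b_def by (simp only: mult.assoc)
      also have "\<dots> = (deriv^^Suc k) \<phi> y / fact k * (x - y)^Suc k" by (simp only: fact_ratio)
      also have "\<dots> = (x - y) * ((deriv^^(k+1)) \<phi> y / fact k * (x - y)^k)" by (simp add: mult_ac)
      finally show "(x - y) * ((deriv^^(k+1)) \<phi> y / fact k * (x - y)^k) = real (Suc k) * b (Suc k)" by simp
    qed
    ultimately have "(\<lambda>k. real (Suc k) * b (Suc k)) sums ((x - y) * d1)" by simp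
    then have "(\<lambda>k. real k * b k) sums ((x - y) * d1 + real 0 * b 0)"
      by (rule sums_Suc_iff[of "\<lambda>k. real k * b k" "(x - y) * d1", THEN iffD1])
    then have S1: "(\<lambda>k. real k * b k) sums ((x - y) * d1)" by simp
    have S2': "(\<lambda>k. (deriv^^(k+2)) \<phi> y / fact k * (x - y)^k) sums d2"
      using cmf_sums[OF c x xy, of 2] unfolding d2_def .
    define g where "g = (\<lambda>k. real k * real (k - 1) * b k)"
    have G2': "(\<lambda>k. (x - y)^2 * ((deriv^^(k+2)) \<phi> y / fact k * (x - y)^k)) sums ((x - y)^2 * d2)"
      by (rule sums_mult[OF S2'])
    have EQ: "(\<lambda>k. (x - y)^2 * ((deriv^^(k+2)) \<phi> y / fact k * (x - y)^k)) = (\<lambda>k. g (Suc (Suc k)))"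
    proof
      fix k
      have "g (Suc (Suc k)) =
         (real (Suc k) * (real (Suc (Suc k)) * ((deriv^^Suc (Suc k)) \<phi> y / fact (Suc (Suc k))))) * (x - y)^Suc (Suc k)"
        unfolding g_def b_def by (simp only: mult_ac diff_Suc_1)
      also have "\<dots> = (deriv^^Suc (Suc k)) \<phi> y / fact k * (x - y)^Suc (Suc k)" by (simp only: fact_ratio)
      also have "\<dots> = (x - y)^2 * ((deriv^^(k+2)) \<phi> y / fact k * (x - y)^k)" by (simp add: mult_ac power2_eq_square)
      finally show "(x - y)^2 * ((deriv^^(k+2)) \<phi> y / fact k * (x - y)^k) = g (Suc (Suc k))" by simp
    qed
    have G2: "(\<lambda>k. g (Suc (Suc k))) sums ((x - y)^2 * d2)" using G2' unfolding EQ .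
    have G1: "(\<lambda>k. g (Suc k)) sums ((x - y)^2 * d2 + g (Suc 0))"
      by (rule iffD1[OF sums_Suc_iff[of "\<lambda>k. g (Suc k)" "(x - y)^2 * d2"]]) (rule G2)
    have G0: "g sums ((x - y)^2 * d2 + g (Suc 0) + g 0)"
      by (rule iffD1[OF sums_Suc_iff[of g "(x - y)^2 * d2 + g (Suc 0)"]]) (rule G1)
    then have S2: "(\<lambda>k. real k * real (k - 1) * b k) sums ((x - y)^2 * d2)" by (simp add: g_def)
    define Q where "Q = (x - y)^2 * d2"
    define M where "M = (x - y) * d1"
    have quad: "0 \<le> Q + (1 - 2*t) * M + t^2 * B" for t
    proof -
      have T: "(\<lambda>k. real k * real (k - 1) * b k + (1 - 2*t) * (real k * b k) + t^2 * b k) sums (Q + (1 - 2*t) * M + t^2 * B)"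
        unfolding Q_def M_def by (intro sums_add sums_mult S2 S1 S0)
      have N: "0 \<le> real k * real (k - 1) * b k + (1 - 2*t) * (real k * b k) + t^2 * b k" for k
      proof -
        have rk: "real k * real (k - 1) = real k * real k - real k" by (cases k) (simp_all add: algebra_simps)
        have "real k * real (k - 1) * b k + (1 - 2*t) * (real k * b k) + t^2 * b k = b k * (real k - t)^2"
          unfolding rk by (simp add: algebra_simps power2_eq_square)
        then show ?thesis using b0[of k] by simp
      qed
      show ?thesis by (rule sums_le[OF _ sums_zero T]) (use N in auto)
    qed
    have "0 \<le> Q + (1 - 2*(M/B)) * M + (M/B)^2 * B" by (rule quad)
    then have "0 \<le> B * (Q + (1 - 2*(M/B)) * M + (M/B)^2 * B)" using Bp B_def by simp
    also have "\<dots> = B * Q + B * M - M^2" using Bp B_def by (simp add: field_simps power2_eq_square)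
    finally have "0 \<le> B * Q + B * M - M^2" .
    moreover have "x - y = - s" by (simp add: y_def)
    ultimately have "0 \<le> B * (s^2 * d2) + B * (- s * d1) - (- s * d1)^2"
      unfolding Q_def M_def by simp
    also have "\<dots> = s * (s * (B * d2 - d1^2) - B * d1)" by (simp add: algebra_simps power2_eq_square)
    finally have "0 \<le> s * (s * (B * d2 - d1^2) - B * d1)" .
    then have "0 \<le> s * (B * d2 - d1^2) - B * d1" using s by (simp add: zero_le_mult_iff)
    then show ?thesis by simp
  qed
  show ?thesis
  proof (rule ccontr)
    assume "\<not> ?thesis"
    then have E: "B * d2 - d1^2 < 0" unfolding d1_def d2_def B_def by simp
    define s where "s = (B * d1) / (B * d2 - d1^2) + 1"
    have "0 \<le> (B * d1) / (B * d2 - d1^2)" using E d1n Bp B_def by (intro divide_nonpos_neg) (auto simp: mult_nonneg_nonpos)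
    then have s0: "0 < s" by (simp add: s_def)
    have "s * (B * d2 - d1^2) = B * d1 + (B * d2 - d1^2)" unfolding s_def using E by (simp add: field_simps)
    then have "s * (B * d2 - d1^2) < B * d1" using E by simp
    with key[OF s0] show False by simp
  qed
qed

lemma cmf_dec:
  assumes c: "CMF \<phi>" and "0 < s" "s \<le> t"
  shows "\<phi> t \<le> \<phi> s"
proof (rule DERIV_nonpos_imp_nonincreasing[of s t \<phi>])
  show "s \<le> t" by fact
  fix z assume z: "s \<le> z" "z \<le> t"
  then have z0: "0 < z" using assms by simp
  have "DERIV \<phi> z :> (deriv^^1) \<phi> z" using cmf_der[OF c z0, of 0] by simp
  moreover have "(deriv^^1) \<phi> z \<le> 0" using cmf_sgn[OF c z0, of 1] by simp
  ultimately show "\<exists>y. DERIV \<phi> z :> y \<and> y \<le> 0" by blast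
qed

lemma cmf_rc: "CMF \<phi> \<Longrightarrow> (\<phi> \<longlongrightarrow> \<phi> 0) (at_right 0)"
  unfolding CMF_def by (simp add: continuous_within)

lemma cmf_pos:
  assumes c: "CMF \<phi>" and p0: "\<phi> 0 = 1" and x: "0 < x"
  shows "0 < \<phi> x"
proof (rule ccontr)
  assume "\<not> 0 < \<phi> x"
  moreover have "0 \<le> \<phi> x" using cmf_sgn[OF c x, of 0] by simp
  ultimately have z: "\<phi> x = 0" by simp
  have zero0: "\<phi> t = 0" if "x < t" for t
    using cmf_dec[OF c x, of t] cmf_sgn[OF c, of t 0] that x z by simp
  have zk: "\<forall>t>x. (deriv^^k) \<phi> t = 0" for k
  proof (induction k)
    case 0 then show ?case using zero0 by simp
  next
    case (Suc k)
    show ?case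
    proof (intro allI impI)
      fix t assume t: "x < t"
      have d: "DERIV ((deriv^^k) \<phi>) t :> (deriv^^Suc k) \<phi> t" using cmf_der[OF c, of t k] t x by simp
      have "DERIV ((deriv^^k) \<phi>) t :> 0"
        by (rule has_field_derivative_transform_within_open[of "\<lambda>_. 0" 0 t "{x<..}"]) (use Suc t in auto)
      then show "(deriv^^Suc k) \<phi> t = 0" using DERIV_unique d by blast
    qed
  qed
  have zz: "0 = \<phi> w" if "0 < w" "w < x + 1" for w
  proof -
    have "(\<lambda>k. (deriv^^(k+0)) \<phi> (x+1) / fact k * (w - (x+1))^k) sums (deriv^^0) \<phi> w"
      by (rule cmf_sums[OF c]) (use that in auto)
    moreover have "(\<lambda>k. (deriv^^(k+0)) \<phi> (x+1) / fact k * (w - (x+1))^k) = (\<lambda>_. 0)" using zk x by auto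
    ultimately have "(\<lambda>_. 0::real) sums \<phi> w" by simp
    then show ?thesis using sums_zero sums_unique2 by blast
  qed
  have ev: "eventually (\<lambda>w. 0 = \<phi> w) (at_right (0::real))"
    by (rule eventually_mono[OF eventually_at_right_real[of 0 1]]) (use zz x in auto)
  have "((\<lambda>_. 0::real) \<longlongrightarrow> 0) (at_right 0)" by simp
  then have "(\<phi> \<longlongrightarrow> 0) (at_right 0)" using ev by (rule Lim_transform_eventually)
  then have "\<phi> 0 = 0" using cmf_rc[OF c] tendsto_unique[OF trivial_limit_at_right_real] by blast
  with p0 show False by simp
qed

lemma cmf_anti:
  assumes c: "CMF \<phi>" and u: "0 \<le> u" "u \<le> v"
  shows "\<phi> v \<le> \<phi> u"
proof (cases "u = 0")
  case False
  then show ?thesis using cmf_dec[OF c] u by simp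
next
  case True
  show ?thesis
  proof (cases "v = 0")
    case True with \<open>u = 0\<close> show ?thesis by simp
  next
    case False
    then have v: "0 < v" using u by simp
    have "eventually (\<lambda>z. \<phi> v \<le> \<phi> z) (at_right 0)"
      by (rule eventually_mono[OF eventually_at_right_real[of 0 v]]) (use v cmf_dec[OF c] in auto)
    then have "\<phi> v \<le> \<phi> 0"
      by (rule tendsto_le[OF trivial_limit_at_right_real cmf_rc[OF c] tendsto_const])
    with True show ?thesis by simp
  qed
qed

lemma logsup:
  assumes c: "CMF \<phi>" and p0: "\<phi> 0 = 1" and e: "0 < \<epsilon>" "\<epsilon> < a" "a \<le> b"
  shows "\<phi> a * \<phi> b \<le> \<phi> \<epsilon> * \<phi> (a + b - \<epsilon>)"
proof -
  define d1 where "d1 = (deriv^^1) \<phi>"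
  define h where "h = (\<lambda>z. d1 z / \<phi> z)"
  define L where "L = (\<lambda>z. ln (\<phi> z))"
  have pos: "0 < \<phi> z" if "0 < z" for z using cmf_pos[OF c p0 that] .
  have dphi: "DERIV \<phi> z :> d1 z" if "0 < z" for z using cmf_der[OF c that, of 0] unfolding d1_def by simp
  have dd1: "DERIV d1 z :> (deriv^^2) \<phi> z" if "0 < z" for z
    using cmf_der[OF c that, of 1] unfolding d1_def by (simp add: numeral_2_eq_2)
  have dL: "DERIV L z :> h z" if z: "0 < z" for z
  proof -
    have "DERIV (\<lambda>z. ln (\<phi> z)) z :> 1 / \<phi> z * d1 z"
      by (rule DERIV_chain2[OF DERIV_ln_divide[OF pos[OF z]] dphi[OF z]])
    then show ?thesis unfolding L_def h_def by simp
  qed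
  have dh: "\<exists>y. DERIV h z :> y \<and> 0 \<le> y" if z: "0 < z" for z
  proof -
    have "DERIV h z :> ((deriv^^2) \<phi> z * \<phi> z - d1 z * d1 z) / (\<phi> z * \<phi> z)"
      unfolding h_def using pos[OF z] by (intro DERIV_divide dd1[OF z] dphi[OF z]) auto
    moreover have "0 \<le> ((deriv^^2) \<phi> z * \<phi> z - d1 z * d1 z) / (\<phi> z * \<phi> z)"
      using cmf_lc[OF c z pos[OF z]] unfolding d1_def by (simp add: power2_eq_square mult.commute)
    ultimately show ?thesis by blast
  qed
  obtain \<xi>1 where x1: "\<epsilon> < \<xi>1" "\<xi>1 < a" "L a - L \<epsilon> = (a - \<epsilon>) * h \<xi>1"
    using MVT2[of \<epsilon> a L h] e dL by auto
  obtain \<xi>2 where x2: "b < \<xi>2" "\<xi>2 < a + b - \<epsilon>" "L (a + b - \<epsilon>) - L b = (a - \<epsilon>) * h \<xi>2"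
    using MVT2[of b "a + b - \<epsilon>" L h] e dL by auto
  have "h \<xi>1 \<le> h \<xi>2"
    by (rule DERIV_nonneg_imp_nondecreasing[of \<xi>1 \<xi>2 h]) (use x1 x2 e dh in auto)
  then have Mf: "(a - \<epsilon>) * h \<xi>1 \<le> (a - \<epsilon>) * h \<xi>2" using e by (intro mult_left_mono) auto
  have "L a - L \<epsilon> \<le> L (a + b - \<epsilon>) - L b" using Mf by (simp only: x1(3) x2(3))
  then have "L a + L b \<le> L \<epsilon> + L (a + b - \<epsilon>)" by linarith
  have pa: "0 < \<phi> a" and pb: "0 < \<phi> b" and pe: "0 < \<phi> \<epsilon>" and pab: "0 < \<phi> (a + b - \<epsilon>)"
    using e pos by auto
  have l1: "ln (\<phi> a * \<phi> b) = L a + L b" proof -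
    have "\<phi> a \<noteq> 0" "\<phi> b \<noteq> 0" using pa pb by linarith+
    then show ?thesis unfolding L_def by (simp add: ln_mult)
  qed
  have l2: "ln (\<phi> \<epsilon> * \<phi> (a + b - \<epsilon>)) = L \<epsilon> + L (a + b - \<epsilon>)" proof -
    have "\<phi> \<epsilon> \<noteq> 0" "\<phi> (a + b - \<epsilon>) \<noteq> 0" using pe pab by linarith+
    then show ?thesis unfolding L_def by (simp add: ln_mult)
  qed
  have "ln (\<phi> a * \<phi> b) \<le> ln (\<phi> \<epsilon> * \<phi> (a + b - \<epsilon>))"
    unfolding l1 l2 by fact
  moreover have P1: "0 < \<phi> a * \<phi> b" by (rule mult_pos_pos[OF pa pb])
  moreover have P2: "0 < \<phi> \<epsilon> * \<phi> (a + b - \<epsilon>)" by (rule mult_pos_pos[OF pe pab])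
  ultimately show ?thesis using ln_le_cancel_iff[OF P1 P2] by blast
qed

lemma cmf_sup:
  assumes c: "CMF \<phi>" and p0: "\<phi> 0 = 1" and ab: "0 \<le> a" "0 \<le> b"
  shows "\<phi> a * \<phi> b \<le> \<phi> (a + b)"
proof -
  have main: "\<phi> a * \<phi> b \<le> \<phi> (a + b)" if a: "0 < a" "a \<le> b" for a b
  proof -
    have ab0: "0 < a + b" using a by simp
    have ic: "isCont \<phi> (a + b)" using DERIV_isCont[OF cmf_der[OF c ab0, of 0]] by simp
    have "((\<lambda>\<epsilon>. a + b - \<epsilon>) \<longlongrightarrow> a + b - 0) (at_right 0)"
      by (intro tendsto_diff tendsto_const tendsto_ident_at)
    then have "((\<lambda>\<epsilon>. \<phi> (a + b - \<epsilon>)) \<longlongrightarrow> \<phi> (a + b)) (at_right 0)"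
      using isCont_tendsto_compose[OF ic] by simp
    then have lim: "((\<lambda>\<epsilon>. \<phi> \<epsilon> * \<phi> (a + b - \<epsilon>)) \<longlongrightarrow> \<phi> 0 * \<phi> (a + b)) (at_right 0)"
      by (intro tendsto_mult cmf_rc[OF c])
    have ls: "\<phi> a * \<phi> b \<le> \<phi> \<epsilon> * \<phi> (a + b - \<epsilon>)" if "\<epsilon> \<in> {0<..<a}" for \<epsilon>
      using that a by (intro logsup[OF c p0]) auto
    have "eventually (\<lambda>\<epsilon>. \<phi> a * \<phi> b \<le> \<phi> \<epsilon> * \<phi> (a + b - \<epsilon>)) (at_right 0)"
      using eventually_mono[OF eventually_at_right_real[OF a(1)] ls] .
    then have "\<phi> a * \<phi> b \<le> \<phi> 0 * \<phi> (a + b)"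
      by (rule tendsto_le[OF trivial_limit_at_right_real lim tendsto_const])
    with p0 show ?thesis by simp
  qed
  show ?thesis
  proof (cases "a = 0 \<or> b = 0")
    case True then show ?thesis using p0 by auto
  next
    case False
    then have "0 < a" "0 < b" using ab by auto
    show ?thesis
    proof (cases "a \<le> b")
      case True then show ?thesis using main[of a b] \<open>0 < a\<close> by simp
    next
      case False
      then have "\<phi> b * \<phi> a \<le> \<phi> (b + a)" using main[of b a] \<open>0 < b\<close> by simp
      then show ?thesis by (simp only: mult.commute[of "\<phi> a"] add.commute[of a])
    qed
  qed
qed

lemma powr_subadd:
  fixes u v p :: real
  assumes "0 \<le> u" "0 \<le> v" "0 < p" "p \<le> 1"
  shows "(u + v) powr p \<le> u powr p + v powr p"
proof (cases "u + v = 0")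
  case True then have "u = 0" "v = 0" using assms by auto
  then show ?thesis by simp
next
  case False
  define w where "w = u + v"
  have w: "0 < w" using False assms by (simp add: w_def)
  have k: "w powr p * (z / w) \<le> z powr p" if z: "0 \<le> z" "z \<le> w" for z
  proof -
    have "z / w = (z / w) powr 1" using z w by simp
    also have "\<dots> \<le> (z / w) powr p" using z w assms by (intro powr_mono') auto
    finally have "w powr p * (z / w) \<le> w powr p * (z / w) powr p" by (intro mult_left_mono) auto
    also have "\<dots> = (w * (z / w)) powr p" by (rule powr_mult[symmetric])
    also have "\<dots> = z powr p" using w by simp
    finally show ?thesis .
  qed
  have "w powr p * (u / w) + w powr p * (v / w) = w powr p * ((u + v) / w)"
    by (simp add: add_divide_distrib distrib_left)
  also have "(u + v) / w = 1" using False by (simp add: w_def)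
  finally have "w powr p = w powr p * (u / w) + w powr p * (v / w)" by simp
  also have "\<dots> \<le> u powr p + v powr p" using k[of u] k[of v] assms by (simp add: w_def)
  finally show ?thesis by (simp add: w_def)
qed

lemma pnorm_tri:
  fixes a b :: "real ^ 'd"
  assumes "0 < p" "p \<le> 1"
  shows "pnorm_pow p (a + b) \<le> pnorm_pow p a + pnorm_pow p b"
  unfolding pnorm_pow_def sum.distrib[symmetric]
proof (rule sum_mono)
  fix d :: 'd
  have "\<bar>(a + b) $ d\<bar> powr p \<le> (\<bar>a $ d\<bar> + \<bar>b $ d\<bar>) powr p"
    using assms by (intro powr_mono2) (auto simp: abs_triangle_ineq)
  also have "\<dots> \<le> \<bar>a $ d\<bar> powr p + \<bar>b $ d\<bar> powr p" using assms by (intro powr_subadd) auto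
  finally show "\<bar>(a + b) $ d\<bar> powr p \<le> \<bar>a $ d\<bar> powr p + \<bar>b $ d\<bar> powr p" .
qed

lemma pnorm_nonneg: "0 \<le> pnorm_pow p a"
  unfolding pnorm_pow_def by (intro sum_nonneg) auto

theorem mainTheorem13:
  fixes \<phi> :: "real \<Rightarrow> real" and p :: real and \<theta>1 \<theta>2 \<theta>3 :: "real ^ 'd"
  assumes "CMF_kernel_params \<phi> p"
  shows "cmf_kernel \<phi> p \<theta>1 \<theta>2 * cmf_kernel \<phi> p \<theta>2 \<theta>3 \<le> cmf_kernel \<phi> p \<theta>1 \<theta>3"
proof -
  have c: "CMF \<phi>" and p0: "\<phi> 0 = 1" and p: "0 < p" "p \<le> 1"
    using assms unfolding CMF_kernel_params_def by auto
  define A where "A = pnorm_pow p (\<theta>1 - \<theta>2)"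
  define B where "B = pnorm_pow p (\<theta>2 - \<theta>3)"
  define C where "C = pnorm_pow p (\<theta>1 - \<theta>3)"
  have e3: "(\<theta>1 - \<theta>2) + (\<theta>2 - \<theta>3) = \<theta>1 - \<theta>3" by simp
  have "pnorm_pow p (\<theta>1 - \<theta>3) \<le> pnorm_pow p (\<theta>1 - \<theta>2) + pnorm_pow p (\<theta>2 - \<theta>3)"
    using pnorm_tri[OF p, of "\<theta>1 - \<theta>2" "\<theta>2 - \<theta>3"] by (simp only: e3)
  then have "C \<le> A + B" by (simp only: A_def B_def C_def)
  have "\<phi> A * \<phi> B \<le> \<phi> (A + B)" by (rule cmf_sup[OF c p0]) (simp_all add: A_def B_def pnorm_nonneg)
  also have "\<dots> \<le> \<phi> C"
  proof -
    have C0: "0 \<le> C" by (simp add: C_def pnorm_nonneg)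
    show ?thesis by (rule cmf_anti[OF c C0 \<open>C \<le> A + B\<close>])
  qed
  finally show ?thesis unfolding cmf_kernel_def A_def B_def C_def .
qed

end
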